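(* Suppose $f$ is log-concave and symmetric about its mean, let $t\ge0$, and let $\delta$ be any non-null classifier. Let $\gamma_\mu$ be the median cost. Then the median individual's payoff from reward $r_1^*=k_1/\rho$ when complying, $-\gamma_\mu+k_1(1-F(k_1))+tF(k_1)$, is at least as high as the median individual's payoff from reward $r_0^*=k_0/\rho$ when not complying, $-k_0F(k_0)+tF(k_0)$, if and only if $\gamma_\mu\le t$.
   Context: Costs $\gamma_i\in\mathbb{R}$ of compliance are distributed according to a continuously differentiable CDF $F$ with density $f$ of full support on $\mathbb{R}$; $\gamma_\mu$ satisfies $F(\gamma_\mu)=\tfrac12$. A classifier $\delta=(\delta_1,\delta_0)\in[0,1]^2$ has responsiveness $\rho=(\delta_1+\delta_0-1)(2\phi-1)$ with $\phi\in(\tfrac12,1]$, non-null meaning $\rho\neq0$. Individuals with $d_i=1$ receive reward $r$, financed by an equal tax (budget balance), and each gets $t$ times the compliance rate $F(r\rho)$. Conditional payoffs from reward $r$: complying, $-\gamma_i+r\rho(1-F(r\rho))+tF(r\rho)$; not complying, $-r\rho F(r\rho)+tF(r\rho)$. The numbers $k_0,k_1$ are defined by $k_0=t-\frac{F(k_0)}{f(k_0)}$ and $k_1=t+\frac{1-F(k_1)}{f(k_1)}$, so $r_1^*$ and $r_0^*$ are the maximizers of the complying and non-complying conditional payoffs respectively. *)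

theory Defs
  imports "HOL-Analysis.Analysis"
begin

definition is_cdf_with_density :: "(real \<Rightarrow> real) \<Rightarrow> (real \<Rightarrow> real) \<Rightarrow> bool" where
  "is_cdf_with_density F f \<longleftrightarrow>
     mono F \<and> (F \<longlongrightarrow> 0) at_bot \<and> (F \<longlongrightarrow> 1) at_top \<and>
     (\<forall>x. (F has_real_derivative f x) (at x)) \<and> continuous_on UNIV f \<and>
     (\<forall>x. f x > 0)"

definition log_concave :: "(real \<Rightarrow> real) \<Rightarrow> bool" where
  "log_concave f \<longleftrightarrow> (\<forall>x. f x > 0) \<and> concave_on UNIV (\<lambda>x. ln (f x))"

definition density_mean :: "(real \<Rightarrow> real) \<Rightarrow> real" where
  "density_mean f = (\<integral>x. x * f x \<partial>lborel)"

definition symmetric_about_mean :: "(real \<Rightarrow> real) \<Rightarrow> bool" where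
  "symmetric_about_mean f \<longleftrightarrow>
     integrable lborel (\<lambda>x. x * f x) \<and>
     (\<forall>x. f (density_mean f + x) = f (density_mean f - x))"

definition responsiveness :: "real \<Rightarrow> real \<Rightarrow> real \<Rightarrow> real" where
  "responsiveness d1 d0 phi = (d1 + d0 - 1) * (2 * phi - 1)"

end

theory Submission
  imports Defs
begin

definition LC :: "(real \<Rightarrow> real) \<Rightarrow> bool" where
  "LC f \<longleftrightarrow> (\<forall>x y u. x \<le> y \<longrightarrow> 0 \<le> u \<longrightarrow> f x * f (y+u) \<le> f (x+u) * f y)"

definition gg :: "(real \<Rightarrow> real) \<Rightarrow> (real \<Rightarrow> real) \<Rightarrow> real \<Rightarrow> real" where
  "gg F f x = x - (1 - F x) / f x"

definition XX :: "(real \<Rightarrow> real) \<Rightarrow> (real \<Rightarrow> real) \<Rightarrow> real \<Rightarrow> real" where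
  "XX F f c = (THE x. gg F f x = c)"

definition PP :: "(real \<Rightarrow> real) \<Rightarrow> (real \<Rightarrow> real) \<Rightarrow> real \<Rightarrow> real" where
  "PP F f c = (XX F f c - c) * (1 - F (XX F f c))"

context
  fixes F f :: "real \<Rightarrow> real"
  assumes Fd: "\<And>x. (F has_real_derivative f x) (at x)"
    and fc: "continuous_on UNIV f"
    and fpos: "\<And>x. f x > 0"
    and Ftop: "(F \<longlongrightarrow> 1) at_top"
begin

lemma Fd2[derivative_intros]: "(g has_real_derivative g') (at x) \<Longrightarrow> ((\<lambda>x. F (g x)) has_real_derivative f (g x) * g') (at x)"
  using DERIV_chain2[OF Fd] by blast

lemma fcont: "isCont f x"
  using fc by (simp add: continuous_on_eq_continuous_at)

lemma Fcont: "isCont F x"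
  using Fd DERIV_isCont by blast

lemma Fstrict: "x < y \<Longrightarrow> F x < F y"
  by (rule DERIV_pos_imp_increasing[of x y]) (use Fd fpos in auto)

lemma Fle1: "F x \<le> 1"
proof (rule tendsto_le[OF _ Ftop tendsto_const])
  show "\<forall>\<^sub>F z in at_top. F x \<le> F z"
    using eventually_ge_at_top[of x] by eventually_elim (metis Fstrict order.order_iff_strict)
qed simp

lemma Flt1: "F x < 1"
  using Fstrict[of x "x+1"] Fle1[of "x+1"] by simp

lemma Ftop': "((\<lambda>u. F (x + u)) \<longlongrightarrow> 1) at_top"
proof -
  have "filterlim (\<lambda>u. x + u) at_top at_top"
    by (rule filterlim_tendsto_add_at_top[OF tendsto_const filterlim_ident])
  then show ?thesis using Ftop by (rule filterlim_compose[rotated])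
qed

lemma mills_anti:
  assumes lc: "\<And>x y u. x \<le> y \<Longrightarrow> 0 \<le> u \<Longrightarrow> f x * f (y+u) \<le> f (x+u) * f y"
    and xy: "x \<le> y"
  shows "(1 - F y) / f y \<le> (1 - F x) / f x"
proof -
  define G where "G u = (F (x+u) - F x) * f y - (F (y+u) - F y) * f x" for u
  have dG: "(G has_real_derivative (f (x+u) * f y - f (y+u) * f x)) (at u)" for u
    unfolding G_def by (auto intro!: derivative_eq_intros)
  have G0: "G u \<ge> 0" if "u \<ge> 0" for u
  proof -
    have "G 0 \<le> G u"
    proof (rule DERIV_nonneg_imp_increasing_open[OF that])
      show "\<exists>y. (G has_real_derivative y) (at z) \<and> 0 \<le> y" if "0 < z" "z < u" for z
        using dG[of z] lc[OF xy, of z] that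
        by (intro exI[where x="f (x+z) * f y - f (y+z) * f x"]) (auto simp: mult.commute)
      show "continuous_on {0..u} G"
        using dG by (meson DERIV_isCont continuous_at_imp_continuous_on)
    qed
    then show ?thesis by (simp add: G_def)
  qed
  have "(G \<longlongrightarrow> (1 - F x) * f y - (1 - F y) * f x) at_top"
    unfolding G_def by (intro tendsto_intros Ftop')
  then have "0 \<le> (1 - F x) * f y - (1 - F y) * f x"
    by (rule tendsto_le[OF trivial_limit_at_top_linorder _ tendsto_const])
       (auto intro: eventually_mono[OF eventually_ge_at_top[of 0]] G0)
  then show ?thesis
    using fpos[of x] fpos[of y] by (simp add: divide_simps)
qed

context
  assumes lcH: "LC f"
begin

lemma lc: "x \<le> y \<Longrightarrow> 0 \<le> u \<Longrightarrow> f x * f (y+u) \<le> f (x+u) * f y"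
  using lcH unfolding LC_def by blast


lemma gg_strict: "x < y \<Longrightarrow> gg F f x < gg F f y"
  using mills_anti[OF lc, of x y] unfolding gg_def by simp

lemma gg_cont: "isCont (gg F f) x"
  unfolding gg_def using fpos[of x] by (intro continuous_intros Fcont fcont) auto

lemma gg_inj: "gg F f x = gg F f y \<Longrightarrow> x = y"
  by (metis gg_strict linorder_neqE_linordered_idom order_less_irrefl)

lemma gg_ex: "\<exists>x. gg F f x = c"
proof -
  let ?h = "(1 - F c) / f c"
  have h0: "?h > 0" using Flt1[of c] fpos[of c] by simp
  have "gg F f c \<le> c" using h0 unfolding gg_def by simp
  moreover have "c \<le> gg F f (c + ?h)"
    using mills_anti[OF lc, of c "c + ?h"] h0 unfolding gg_def by simp
  ultimately show ?thesis
    using IVT[of "gg F f" c c "c + ?h"] gg_cont h0 by auto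
qed


lemma gg_XX: "gg F f (XX F f c) = c"
  unfolding XX_def by (rule theI') (use gg_ex gg_inj in blast)

lemma XX_gg: "XX F f (gg F f x) = x"
  using gg_XX gg_inj by blast

lemma XX_eq: "gg F f x = c \<Longrightarrow> XX F f c = x"
  using XX_gg by blast

lemma XX_cont: "isCont (XX F f) c"
proof -
  have "isCont (XX F f) (gg F f (XX F f c))"
    by (rule isCont_inverse_function[of 1]) (auto simp: XX_gg gg_cont)
  then show ?thesis by (simp add: gg_XX)
qed

lemma XX_max: "(y - c) * (1 - F y) \<le> (XX F f c - c) * (1 - F (XX F f c))"
proof -
  define x where "x = XX F f c"
  have gx: "gg F f x = c" unfolding x_def by (rule gg_XX)
  define phi where "phi y = (y - c) * (1 - F y)" for y
  have dphi: "(phi has_real_derivative (f z * (c - gg F f z))) (at z)" for z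
  proof -
    have "(phi has_real_derivative ((1 - F z) - (z - c) * f z)) (at z)"
      unfolding phi_def by (auto intro!: derivative_eq_intros)
    moreover have "(1 - F z) - (z - c) * f z = f z * (c - gg F f z)"
      using fpos[of z] unfolding gg_def by (simp add: field_simps)
    ultimately show ?thesis by simp
  qed
  have cphi: "continuous_on S phi" for S
    using dphi by (meson DERIV_isCont continuous_at_imp_continuous_on)
  have "phi y \<le> phi x"
  proof (cases "y \<le> x")
    case True
    show ?thesis
    proof (rule DERIV_nonneg_imp_increasing_open[OF True _ cphi])
      fix z assume "y < z" "z < x"
      then have "gg F f z < c" using gg_strict gx by blast
      then show "\<exists>d. (phi has_real_derivative d) (at z) \<and> 0 \<le> d"
        using dphi[of z] fpos[of z] by (intro exI[where x="f z * (c - gg F f z)"]) auto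
    qed
  next
    case False
    show ?thesis
    proof (rule DERIV_nonpos_imp_decreasing_open[of x y, OF _ _ cphi])
      fix z assume "x < z" "z < y"
      then have "gg F f z > c" using gg_strict gx by blast
      then show "\<exists>d. (phi has_real_derivative d) (at z) \<and> d \<le> 0"
        using dphi[of z] fpos[of z]
        by (intro exI[where x="f z * (c - gg F f z)"]) (auto simp: mult_nonneg_nonpos)
    qed (use False in auto)
  qed
  then show ?thesis unfolding phi_def x_def .
qed


lemma PP_deriv: "((PP F f) has_real_derivative (- (1 - F (XX F f c)))) (at c)"
proof -
  let ?U = "\<lambda>d. 1 - F (XX F f d)"
  have q1: "PP F f d - PP F f c \<ge> - (d - c) * ?U c" for d
    using XX_max[of "XX F f c" d] unfolding PP_def by (simp add: algebra_simps)
  have q2: "PP F f d - PP F f c \<le> - (d - c) * ?U d" for d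
    using XX_max[of "XX F f d" c] unfolding PP_def by (simp add: algebra_simps)
  have Uc: "isCont ?U c"
    by (intro continuous_intros continuous_at_compose[OF XX_cont] Fcont[unfolded isCont_def])
       (simp add: isCont_o2[OF XX_cont Fcont])
  have lim: "((\<lambda>d. (PP F f d - PP F f c) / (d - c)) \<longlongrightarrow> - ?U c) (at c)"
  proof (rule tendsto_sandwich[where f="\<lambda>d. min (- ?U c) (- ?U d)" and h="\<lambda>d. max (- ?U c) (- ?U d)"])
    show "\<forall>\<^sub>F d in at c. min (- ?U c) (- ?U d) \<le> (PP F f d - PP F f c) / (d - c)"
      unfolding eventually_at_filter
    proof (intro always_eventually allI impI)
      fix d assume "d \<noteq> c"
      have "(d < c \<and> - ?U d \<le> (PP F f d - PP F f c) / (d - c)) \<or> (d > c \<and> - ?U c \<le> (PP F f d - PP F f c) / (d - c))"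
        using q1[of d] q2[of d] \<open>d \<noteq> c\<close>
        by (cases "d < c") (auto simp: divide_simps algebra_simps)
      then show "min (- ?U c) (- ?U d) \<le> (PP F f d - PP F f c) / (d - c)"
        by linarith
    qed
    show "\<forall>\<^sub>F d in at c. (PP F f d - PP F f c) / (d - c) \<le> max (- ?U c) (- ?U d)"
      unfolding eventually_at_filter
    proof (intro always_eventually allI impI)
      fix d assume "d \<noteq> c"
      have "(d < c \<and> (PP F f d - PP F f c) / (d - c) \<le> - ?U c) \<or> (d > c \<and> (PP F f d - PP F f c) / (d - c) \<le> - ?U d)"
        using q1[of d] q2[of d] \<open>d \<noteq> c\<close>
        by (cases "d < c") (auto simp: divide_simps algebra_simps)
      then show "(PP F f d - PP F f c) / (d - c) \<le> max (- ?U c) (- ?U d)"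
        by linarith
    qed
    have mU: "((\<lambda>d. - ?U d) \<longlongrightarrow> - ?U c) (at c)"
      using Uc unfolding isCont_def by (rule tendsto_minus)
    show "((\<lambda>d. min (- ?U c) (- ?U d)) \<longlongrightarrow> - ?U c) (at c)"
       "((\<lambda>d. max (- ?U c) (- ?U d)) \<longlongrightarrow> - ?U c) (at c)"
      using tendsto_min[OF tendsto_const mU, of "- ?U c"] tendsto_max[OF tendsto_const mU, of "- ?U c"]
      by simp_all
  qed
  then show ?thesis by (simp add: has_field_derivative_iff)
qed

lemma W_mono:
  assumes symF: "\<And>x. F (2*m - x) + F x = 1"
    and cd: "c < d"
  shows "d - m + PP F f d - PP F f (2*m - d) > c - m + PP F f c - PP F f (2*m - c)"
proof -
  define W where "W c = c - m + PP F f c - PP F f (2*m - c)" for c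
  have dW: "(W has_real_derivative (1 - (1 - F (XX F f z)) - (1 - F (XX F f (2*m - z))))) (at z)" for z
    unfolding W_def
    by (rule derivative_eq_intros DERIV_chain2[OF PP_deriv] refl | simp)+
  have pos: "1 - (1 - F (XX F f z)) - (1 - F (XX F f (2*m - z))) > 0" for z
  proof -
    have a: "XX F f z > z"
      using gg_XX[of z] Flt1[of "XX F f z"] fpos[of "XX F f z"] unfolding gg_def
      by (smt (verit) divide_pos_pos)
    have b: "XX F f (2*m - z) > 2*m - z"
      using gg_XX[of "2*m-z"] Flt1[of "XX F f (2*m-z)"] fpos[of "XX F f (2*m-z)"] unfolding gg_def
      by (smt (verit) divide_pos_pos)
    have "F (2*m - XX F f (2*m - z)) < F (XX F f z)"
      using a b by (intro Fstrict) simp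
    then show ?thesis using symF[of "XX F f (2*m - z)"] by simp
  qed
  have "W c < W d"
    by (rule DERIV_pos_imp_increasing[OF cd]) (use dW pos in blast)
  then show ?thesis unfolding W_def .
qed

end

end

lemma lc_from_concave:
  fixes f :: "real \<Rightarrow> real" and x y u :: real
  assumes fpos: "\<And>x. f x > 0" and cc: "concave_on UNIV (\<lambda>x. ln (f x))"
    and xy: "x \<le> y" and u: "0 \<le> u"
  shows "f x * f (y+u) \<le> f (x+u) * f y"
proof (cases "u = 0")
  case True then show ?thesis by (simp add: mult.commute)
next
  case False
  with u have u0: "u > 0" by simp
  define D where "D = y - x + u"
  have D0: "D > 0" using xy u0 unfolding D_def by simp
  have yD: "y + u - x = D" unfolding D_def by simp
  have e1: "ln (f (x+u)) \<ge> (1 - u/D) * ln (f x) + (u/D) * ln (f (y+u))"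
  proof -
    have "(1 - u/D) *\<^sub>R x + (u/D) *\<^sub>R (y+u) = x + u/D * (y + u - x)"
      by (simp add: algebra_simps)
    also have "\<dots> = x + u" using D0 unfolding yD by simp
    finally have "(1 - u/D) *\<^sub>R x + (u/D) *\<^sub>R (y+u) = x + u" .
    moreover have "(1 - u/D) * ln (f x) + (u/D) * ln (f (y+u)) \<le> ln (f ((1 - u/D) *\<^sub>R x + (u/D) *\<^sub>R (y+u)))"
      by (rule concave_onD[OF cc]) (use D0 u0 xy in \<open>auto simp: D_def divide_simps\<close>)
    ultimately show ?thesis by simp
  qed
  have e2: "ln (f y) \<ge> (u/D) * ln (f x) + (1 - u/D) * ln (f (y+u))"
  proof -
    have "(1 - (1 - u/D)) *\<^sub>R x + (1 - u/D) *\<^sub>R (y+u) = y + u - u/D * (y + u - x)"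
      by (simp add: algebra_simps)
    also have "\<dots> = y" using D0 unfolding yD by simp
    finally have "(1 - (1 - u/D)) *\<^sub>R x + (1 - u/D) *\<^sub>R (y+u) = y" .
    moreover have "(1 - (1 - u/D)) * ln (f x) + (1 - u/D) * ln (f (y+u)) \<le> ln (f ((1 - (1 - u/D)) *\<^sub>R x + (1 - u/D) *\<^sub>R (y+u)))"
      by (rule concave_onD[OF cc]) (use D0 u0 xy in \<open>auto simp: D_def divide_simps\<close>)
    ultimately show ?thesis by simp
  qed
  have "ln (f x) + ln (f (y+u)) \<le> ln (f (x+u)) + ln (f y)"
    using e1 e2 by (simp add: algebra_simps)
  then have "ln (f x * f (y+u)) \<le> ln (f (x+u) * f y)"
    using fpos[of x] fpos[of y] fpos[of "x+u"] fpos[of "y+u"] by (simp add: ln_mult)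
  then show ?thesis using fpos by (simp add: mult_pos_pos)
qed

theorem proposition9:
  fixes F f :: "real \<Rightarrow> real"
    and t gamma_mu k0 k1 d1 d0 phi :: real
  assumes cdf: "is_cdf_with_density F f"
    and logc: "log_concave f"
    and symm: "symmetric_about_mean f"
    and t_nonneg: "t \<ge> 0"
    and median: "F gamma_mu = 1 / 2"
    and k0_def: "k0 = t - F k0 / f k0"
    and k1_def: "k1 = t + (1 - F k1) / f k1"
    and d1: "d1 \<in> {0..1}" and d0: "d0 \<in> {0..1}"
    and phi: "phi \<in> {1/2<..1}"
    and nonnull: "responsiveness d1 d0 phi \<noteq> 0"
  shows "(- gamma_mu + k1 * (1 - F k1) + t * F k1 \<ge> - k0 * F k0 + t * F k0)
           \<longleftrightarrow> gamma_mu \<le> t"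
proof -
  have Fd: "\<And>x. (F has_real_derivative f x) (at x)" and fc: "continuous_on UNIV f"
    and fpos: "\<And>x. f x > 0" and Ftop: "(F \<longlongrightarrow> 1) at_top" and Fbot: "(F \<longlongrightarrow> 0) at_bot"
    using cdf unfolding is_cdf_with_density_def by auto
  define m where "m = density_mean f"
  have symf: "\<And>x. f (m + x) = f (m - x)"
    using symm unfolding symmetric_about_mean_def m_def by auto
  have lc: "\<And>x y u. x \<le> y \<Longrightarrow> 0 \<le> u \<Longrightarrow> f x * f (y+u) \<le> f (x+u) * f y"
    using lc_from_concave[of f, OF fpos] logc unfolding log_concave_def by simp
  note ctx = Fd fc fpos Ftop
  have lcH: "LC f" unfolding LC_def using lc by blast
  note ctx2 = ctx lcH
  have symF0: "F (m + x) + F (m - x) = 1" for x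
  proof -
    define D where "D x = F (m + x) + F (m - x)" for x
    have dD: "(D has_real_derivative 0) (at x)" for x
    proof -
      have i1: "((\<lambda>x. m + x) has_real_derivative 1) (at x)"
        by (auto intro!: derivative_eq_intros)
      have i2: "((\<lambda>x. m - x) has_real_derivative -1) (at x)"
        by (auto intro!: derivative_eq_intros)
      have "(D has_real_derivative (f (m + x) * 1 + f (m - x) * (-1))) (at x)"
        unfolding D_def by (rule DERIV_add[OF DERIV_chain2[OF Fd i1] DERIV_chain2[OF Fd i2]])
      then show ?thesis using symf[of x] by simp
    qed
    have cst: "D x = D 0" for x using DERIV_isconst_all[OF allI[OF dD]] .
    have l1: "((\<lambda>x. F (m + x)) \<longlongrightarrow> 1) at_top" by (rule Ftop'[OF ctx])
    have "filterlim (\<lambda>x. m + - x) at_bot at_top"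
      by (subst filterlim_tendsto_add_at_bot_iff[OF tendsto_const]) (rule filterlim_uminus_at_bot_at_top)
    from filterlim_compose[OF Fbot this] have l2: "((\<lambda>x. F (m - x)) \<longlongrightarrow> 0) at_top"
      by (simp add: o_def)
    have "(D \<longlongrightarrow> 1 + 0) at_top" unfolding D_def by (intro tendsto_add l1 l2)
    moreover have "(D \<longlongrightarrow> D 0) at_top"
      by (rule tendsto_eventually, rule always_eventually, rule allI, rule cst)
    ultimately have "D 0 = 1"
      using tendsto_unique[OF trivial_limit_at_top_linorder] by fastforce
    then show ?thesis using cst[of x] unfolding D_def by simp
  qed
  have symF: "F (2*m - x) + F x = 1" for x
    using symF0[of "m - x"] by simp
  have gm: "gamma_mu = m"
  proof -
    have "F m = 1/2" using symF0[of 0] by simp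
    then show ?thesis using median Fstrict[OF ctx, of gamma_mu m] Fstrict[OF ctx, of m gamma_mu]
      by (cases gamma_mu m rule: linorder_cases) auto
  qed
  have X1: "XX F f t = k1"
  proof -
    have "(1 - F k1) / f k1 = k1 - t" using k1_def by linarith
    then have "gg F f k1 = t" unfolding gg_def by linarith
    then show ?thesis by (rule XX_eq[OF ctx2])
  qed
  define k0' where "k0' = 2*m - k0"
  have Fk0': "F k0' = 1 - F k0" using symF[of k0] unfolding k0'_def by simp
  have fk0': "f k0' = f k0" using symf[of "m - k0"] unfolding k0'_def by (simp add: algebra_simps)
  have X0: "XX F f (2*m - t) = k0'"
  proof -
    have "F k0 / f k0 = t - k0" using k0_def by linarith
    moreover have "(1 - F k0') / f k0' = F k0 / f k0" using Fk0' fk0' by simp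
    ultimately have "gg F f k0' = 2*m - t" unfolding gg_def k0'_def by linarith
    then show ?thesis by (rule XX_eq[OF ctx2])
  qed
  have P1: "PP F f t = (k1 - t) * (1 - F k1)" unfolding PP_def X1 ..
  have P0: "PP F f (2*m - t) = (t - k0) * F k0" unfolding PP_def X0 Fk0' by (simp add: k0'_def)
  have eq: "(- gamma_mu + k1 * (1 - F k1) + t * F k1) - (- k0 * F k0 + t * F k0)
      = t - m + PP F f t - PP F f (2*m - t)"
    unfolding P1 P0 gm by (simp add: algebra_simps)
  show ?thesis
  proof (cases t m rule: linorder_cases)
    case less
    from W_mono[OF ctx2 symF less] show ?thesis using eq less gm by simp
  next
    case equal
    then show ?thesis using eq gm by simp
  next
    case greater
    from W_mono[OF ctx2 symF greater] show ?thesis using eq greater gm by simp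
  qed
qed

end
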